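(* Let $t(n)=\frac{\log n}{\log\log n}$. No deterministic max-of-$t(n)$ online bipartite matching algorithm can achieve an asymptotic approximation ratio greater than $1/2$.
   Context: Online one-sided bipartite matching: offline vertices are known in advance; $n$ online vertices arrive one at a time in adversarial order, each with its set of offline neighbours, and the algorithm must irrevocably match it to an unmatched neighbour or leave it unmatched; the goal is a maximum-size matching. A max-of-$k$ algorithm runs $k$ deterministic online algorithms in parallel, producing $k$ matchings, and outputs the largest. The asymptotic approximation ratio of $\mathbb{A}$ is $\liminf_{n}\inf_{I\in\mathcal{I}_n} v(\mathbb{A},I)/v(I)$, with $v(I)$ the maximum matching size. *)

theory Defs
  imports Complex_Main "HOL-Library.Extended_Real" "HOL-Library.Liminf_Limsup"
begin

text \<open>Offline vertices are natural numbers; an instance consists of the (finite) set R of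
offline vertices and the list Ns of neighbour sets of the online vertices, in arrival order.\<close>

text \<open>A deterministic online algorithm: given the offline vertex set and the neighbour sets
of all online vertices that have arrived so far (the last one being the current vertex), it
proposes an offline vertex to match the current vertex to, or None.  Its own earlier decisions
are determined by this information, since the algorithm is deterministic.\<close>
type_synonym online_alg = "nat set \<Rightarrow> nat set list \<Rightarrow> nat option"

fun run_from :: "online_alg \<Rightarrow> nat set \<Rightarrow> nat set list \<Rightarrow> nat set \<Rightarrow> nat set list \<Rightarrow> nat" where
  "run_from A R past used [] = 0"
| "run_from A R past used (N # rest) =
     (let h = past @ [N] in
      case A R h of
        Some r \<Rightarrow> (if r \<in> N \<and> r \<notin> used
                   then Suc (run_from A R h (insert r used) rest)
                   else run_from A R h used rest)
      | None \<Rightarrow> run_from A R h used rest)"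

definition alg_value :: "online_alg \<Rightarrow> nat set \<Rightarrow> nat set list \<Rightarrow> nat" where
  "alg_value A R Ns = run_from A R [] {} Ns"

definition max_of_value :: "(nat \<Rightarrow> online_alg) \<Rightarrow> nat \<Rightarrow> nat set \<Rightarrow> nat set list \<Rightarrow> nat" where
  "max_of_value As k R Ns = Max (insert 0 {alg_value (As i) R Ns | i. i < k})"

definition is_matching :: "nat set list \<Rightarrow> (nat \<times> nat) set \<Rightarrow> bool" where
  "is_matching Ns M \<longleftrightarrow>
     M \<subseteq> {(i, r). i < length Ns \<and> r \<in> Ns ! i} \<and>
     (\<forall>(i, r) \<in> M. \<forall>(j, s) \<in> M. (i = j \<longleftrightarrow> r = s))"

definition opt_value :: "nat set list \<Rightarrow> nat" where
  "opt_value Ns = Max {card M | M. is_matching Ns M}"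

text \<open>Instances with n online vertices (with nonzero optimum, so that the ratio is defined).\<close>
definition instances :: "nat \<Rightarrow> (nat set \<times> nat set list) set" where
  "instances n = {(R, Ns). finite R \<and> length Ns = n \<and> (\<forall>N \<in> set Ns. N \<subseteq> R)
                           \<and> opt_value Ns > 0}"

definition ratio_n :: "(nat \<Rightarrow> online_alg) \<Rightarrow> nat \<Rightarrow> nat \<Rightarrow> ereal" where
  "ratio_n As k n = (INF I \<in> instances n.
      ereal (real (max_of_value As k (fst I) (snd I)) / real (opt_value (snd I))))"

definition t_fun :: "nat \<Rightarrow> real" where
  "t_fun n = ln (real n) / ln (ln (real n))"

end

theory Submission
  imports Defs "HOL-Real_Asymp.Real_Asymp"
begin


fun usedP :: "online_alg \<Rightarrow> nat set \<Rightarrow> nat set list \<Rightarrow> nat \<Rightarrow> nat set" where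
  "usedP A R Ns 0 = {}"
| "usedP A R Ns (Suc i) = (let U = usedP A R Ns i in
     case A R (take (Suc i) Ns) of Some r \<Rightarrow> (if r \<in> Ns ! i \<and> r \<notin> U then insert r U else U)
     | None \<Rightarrow> U)"

lemma usedP_finite: "finite (usedP A R Ns i)"
  by (induction i) (auto simp: Let_def split: option.split)

lemma usedP_append: "i \<le> length h \<Longrightarrow> usedP A R (h @ t) i = usedP A R h i"
  by (induction i) (auto simp: Let_def nth_append split: option.split)

lemma run_eq: "j \<le> length Ns \<Longrightarrow> run_from A R (take j Ns) (usedP A R Ns j) (drop j Ns)
   + card (usedP A R Ns j) = card (usedP A R Ns (length Ns))"
proof (induction "length Ns - j" arbitrary: j)
  case 0 then have "j = length Ns" by simp
  then show ?case by simp
next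
  case (Suc d)
  then have j: "j < length Ns" by simp
  have dr: "drop j Ns = Ns ! j # drop (Suc j) Ns" using j by (simp add: Cons_nth_drop_Suc)
  have tk: "take j Ns @ [Ns ! j] = take (Suc j) Ns" using j by (simp add: take_Suc_conv_app_nth)
  have IH: "run_from A R (take (Suc j) Ns) (usedP A R Ns (Suc j)) (drop (Suc j) Ns)
     + card (usedP A R Ns (Suc j)) = card (usedP A R Ns (length Ns))"
    using Suc.hyps(1)[of "Suc j"] Suc.hyps(2) j by simp
  show ?case
    using IH by (auto simp add: dr tk Let_def usedP_finite split: option.split)
qed

lemma alg_value_eq: "alg_value A R Ns = card (usedP A R Ns (length Ns))"
  using run_eq[of 0 Ns A R] by (simp add: alg_value_def)




context
  fixes As :: "nat \<Rightarrow> online_alg" and R :: "nat set" and k :: nat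
begin

definition UU :: "nat \<Rightarrow> nat set list \<Rightarrow> nat set" where
  "UU a h = usedP (As a) R h (length h)"

definition usage :: "nat set list \<Rightarrow> nat \<Rightarrow> nat set" where
  "usage h y = {a. a < k \<and> y \<in> UU a h}"

definition grp :: "nat set list \<Rightarrow> nat set \<Rightarrow> nat set \<Rightarrow> nat set" where
  "grp h S V = {y \<in> S. usage h y = V}"

definition Vsel :: "nat set list \<Rightarrow> nat set \<Rightarrow> nat set" where
  "Vsel h S = (SOME V. k < card (grp h S V))"

definition xsel :: "nat set list \<Rightarrow> nat set \<Rightarrow> nat" where
  "xsel h S = (SOME x. x \<in> grp h S (Vsel h S) \<and> usage (h @ [grp h S (Vsel h S)]) x = Vsel h S)"

fun adv :: "nat \<Rightarrow> nat set list \<times> nat set \<times> (nat \<times> nat) set" where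
  "adv 0 = ([], R, {})"
| "adv (Suc i) = (case adv i of (h, S, X) \<Rightarrow>
     if (\<exists>V. k < card (grp h S V))
     then (h @ [grp h S (Vsel h S)], S - {xsel h S}, insert (length h, xsel h S) X)
     else (h @ [{}], S, X))"

lemma UU_snoc: "UU a (h @ [N]) = (case As a R (h @ [N]) of
    Some r \<Rightarrow> (if r \<in> N \<and> r \<notin> UU a h then insert r (UU a h) else UU a h)
  | None \<Rightarrow> UU a h)"
proof -
  have l: "length (h @ [N]) = Suc (length h)" by simp
  have n: "(h @ [N]) ! length h = N" by simp
  have t: "take (Suc (length h)) (h @ [N]) = h @ [N]" by simp
  have p: "usedP (As a) R (h @ [N]) (length h) = UU a h"
    unfolding UU_def by (rule usedP_append) simp
  show ?thesis unfolding UU_def l usedP.simps(2) Let_def t n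
    using p unfolding UU_def
    apply (simp only: p[unfolded UU_def])
    done
qed

lemma UU_mono: "UU a h \<subseteq> UU a (h @ [N])"
  by (auto simp: UU_snoc split: option.split)

lemma UU_diff: "\<exists>r. UU a (h @ [N]) - UU a h \<subseteq> {r}"
  by (auto simp: UU_snoc split: option.split)

lemma UU_empty: "UU a (h @ [{}]) = UU a h"
  by (auto simp: UU_snoc split: option.split)

lemma step_ok:
  assumes fin: "finite S" and big: "k < card (grp h S V)"
  shows "\<exists>x. x \<in> grp h S V \<and> usage (h @ [grp h S V]) x = V"
proof -
  define N where "N = grp h S V"
  define D where "D = (\<Union>a\<in>{..<k}. UU a (h @ [N]) - UU a h)"
  have c1: "card (UU a (h @ [N]) - UU a h) \<le> 1" for a
  proof -
    obtain r where "UU a (h @ [N]) - UU a h \<subseteq> {r}" using UU_diff by blast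
    then show ?thesis using card_mono[of "{r}"] by fastforce
  qed
  have "card D \<le> (\<Sum>a\<in>{..<k}. card (UU a (h @ [N]) - UU a h))"
    unfolding D_def by (rule card_UN_le) simp
  also have "\<dots> \<le> (\<Sum>a\<in>{..<k}. 1)" by (rule sum_mono) (rule c1)
  finally have cD: "card D \<le> k" by simp
  have finN: "finite N" using fin by (simp add: N_def grp_def)
  have "N - D \<noteq> {}"
  proof
    assume "N - D = {}"
    then have "N \<subseteq> D" by blast
    have finD: "finite D" unfolding D_def
      using usedP_finite unfolding UU_def by blast
    then have "card N \<le> card D" using \<open>N \<subseteq> D\<close> card_mono by blast
    then show False using cD big by (simp add: N_def)
  qed
  then obtain y where y: "y \<in> N" "y \<notin> D" by blast
  have "usage (h @ [N]) y = usage h y"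
    using y(2) UU_mono unfolding usage_def D_def by blast
  also have "\<dots> = V" using y(1) by (simp add: N_def grp_def)
  finally show ?thesis using y(1) by (auto simp: N_def)
qed

lemma stuck_bound:
  assumes fin: "finite S" and st: "\<not> (\<exists>V. k < card (grp h S V))"
  shows "card S \<le> k * 2 ^ k"
proof -
  have "S \<subseteq> (\<Union>V\<in>Pow {..<k}. grp h S V)"
    by (auto simp: grp_def usage_def)
  then have "card S \<le> card (\<Union>V\<in>Pow {..<k}. grp h S V)"
    by (intro card_mono) (auto simp: grp_def fin)
  also have "\<dots> \<le> (\<Sum>V\<in>Pow {..<k}. card (grp h S V))"
    by (rule card_UN_le) simp
  also have "\<dots> \<le> (\<Sum>V\<in>Pow {..<k}. k)"
    by (rule sum_mono) (use st in \<open>simp add: not_less\<close>)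
  also have "\<dots> = k * 2 ^ k" by (simp add: card_Pow)
  finally show ?thesis .
qed


lemma UU_change:
  assumes "UU a (h @ [N]) \<noteq> UU a h"
  shows "\<exists>r. r \<in> N \<and> r \<notin> UU a h \<and> UU a (h @ [N]) = insert r (UU a h)"
  using assms by (auto simp: UU_snoc split: option.splits if_splits)

lemma UU_nil: "UU a [] = {}" by (simp add: UU_def)

definition inv :: "nat \<Rightarrow> nat set list \<times> nat set \<times> (nat \<times> nat) set \<Rightarrow> bool" where
  "inv i st = (case st of (h, S, X) \<Rightarrow> length h = i \<and> S \<subseteq> R \<and> (\<forall>N\<in>set h. N \<subseteq> R)
     \<and> X \<subseteq> {(j, r). j < length h \<and> r \<in> h ! j}
     \<and> (\<forall>(i, r)\<in>X. \<forall>(j, s)\<in>X. (i = j \<longleftrightarrow> r = s))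
     \<and> snd ` X \<inter> S = {} \<and> finite X \<and> card X + card S = card R
     \<and> card S \<le> max (card R - i) (k * 2 ^ k)
     \<and> (\<forall>a<k. UU a h \<subseteq> R \<and> (\<exists>Y. finite Y \<and> Y \<subseteq> R \<and> Y \<inter> S = {} \<and> Y \<inter> UU a h = {}
            \<and> card Y = card (UU a h))))"

lemma inv_adv: assumes finR: "finite R" shows "inv i (adv i)"
proof (induction i)
  case 0
  show ?case unfolding inv_def by (simp add: UU_nil) (intro impI exI[of _ "{}"], simp)
next
  case (Suc i)
  obtain h S X where st: "adv i = (h, S, X)" by (metis prod_cases3)
  have C: "length h = i \<and> S \<subseteq> R \<and> (\<forall>N\<in>set h. N \<subseteq> R)
     \<and> X \<subseteq> {(j, r). j < length h \<and> r \<in> h ! j}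
     \<and> (\<forall>(i, r)\<in>X. \<forall>(j, s)\<in>X. (i = j \<longleftrightarrow> r = s))
     \<and> snd ` X \<inter> S = {} \<and> finite X \<and> card X + card S = card R
     \<and> card S \<le> max (card R - i) (k * 2 ^ k)
     \<and> (\<forall>a<k. UU a h \<subseteq> R \<and> (\<exists>Y. finite Y \<and> Y \<subseteq> R \<and> Y \<inter> S = {} \<and> Y \<inter> UU a h = {}
            \<and> card Y = card (UU a h)))"
    using Suc.IH unfolding st inv_def prod.case .
  note I = C[THEN conjunct1] C[THEN conjunct2, THEN conjunct1] C[THEN conjunct2, THEN conjunct2, THEN conjunct1] C[THEN conjunct2, THEN conjunct2, THEN conjunct2, THEN conjunct1] C[THEN conjunct2, THEN conjunct2, THEN conjunct2, THEN conjunct2, THEN conjunct1] C[THEN conjunct2, THEN conjunct2, THEN conjunct2, THEN conjunct2, THEN conjunct2, THEN conjunct1] C[THEN conjunct2, THEN conjunct2, THEN conjunct2, THEN conjunct2, THEN conjunct2, THEN conjunct2, THEN conjunct1] C[THEN conjunct2, THEN conjunct2, THEN conjunct2, THEN conjunct2, THEN conjunct2, THEN conjunct2, THEN conjunct2, THEN conjunct1] C[THEN conjunct2, THEN conjunct2, THEN conjunct2, THEN conjunct2, THEN conjunct2, THEN conjunct2, THEN conjunct2, THEN conjunct2, THEN conjunct1] C[THEN conjunct2, THEN conjunct2, THEN conjunct2, THEN conjunct2, THEN conjunct2, THEN conjunct2, THEN conjunct2, THEN conjunct2, THEN conjunct2]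
  have finS: "finite S" using I(2) finR finite_subset by blast
  show ?case
  proof (cases "\<exists>V. k < card (grp h S V)")
    case True
    define V where "V = Vsel h S"
    have bigV: "k < card (grp h S V)" unfolding V_def Vsel_def using True by (rule someI_ex)
    define N where "N = grp h S V"
    define x where "x = xsel h S"
    have xp: "x \<in> N \<and> usage (h @ [N]) x = V"
      unfolding x_def xsel_def N_def V_def[symmetric]
      using step_ok[OF finS bigV] by (rule someI_ex)
    have NS: "N \<subseteq> S" by (auto simp: N_def grp_def)
    have xS: "x \<in> S" using xp NS by blast
    have adv: "adv (Suc i) = (h @ [N], S - {x}, insert (length h, x) X)"
      using True st by (simp add: N_def V_def x_def)
    have nth: "j < length h \<Longrightarrow> (h @ [N]) ! j = h ! j" for j by (simp add: nth_append)
    have c1: "length (h @ [N]) = Suc i" using I(1) by simp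
    have c2: "S - {x} \<subseteq> R" using I(2) by blast
    have c3: "\<forall>M\<in>set (h @ [N]). M \<subseteq> R" using I(3) NS I(2) by auto
    have c4: "insert (length h, x) X \<subseteq> {(j, r). j < length (h @ [N]) \<and> r \<in> (h @ [N]) ! j}"
      using I(4) xp nth by auto
    have xX: "x \<notin> snd ` X" using I(6) xS by blast
    have hX: "(length h, r) \<notin> X" for r using I(4) by auto
    have c5: "\<forall>(i, r)\<in>insert (length h, x) X. \<forall>(j, s)\<in>insert (length h, x) X. (i = j \<longleftrightarrow> r = s)"
    proof (intro ballI, clarify)
      fix i r j s assume p: "(i, r) \<in> insert (length h, x) X" and q: "(j, s) \<in> insert (length h, x) X"
      have xX': "(a, x) \<notin> X" for a using xX by force
      show "(i = j) = (r = s)"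
        using p q I(5) xX' hX by auto
    qed
    have c6: "snd ` insert (length h, x) X \<inter> (S - {x}) = {}" using I(6) by auto
    have c7: "finite (insert (length h, x) X)" using I(7) by simp
    have cSx: "card (S - {x}) = card S - 1" using xS finS by simp
    have cS1: "card S \<ge> 1" using xS finS card_0_eq by fastforce
    have c8: "card (insert (length h, x) X) + card (S - {x}) = card R"
      using I(7,8) hX cSx cS1 by simp
    have c9: "card (S - {x}) \<le> max (card R - Suc i) (k * 2 ^ k)"
      using I(9) cSx unfolding max_def by (simp split: if_splits; arith)
    have c10: "UU a (h @ [N]) \<subseteq> R \<and> (\<exists>Y. finite Y \<and> Y \<subseteq> R \<and> Y \<inter> (S - {x}) = {}
         \<and> Y \<inter> UU a (h @ [N]) = {} \<and> card Y = card (UU a (h @ [N])))" if a: "a < k" for a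
    proof -
      obtain Y where Y: "finite Y" "Y \<subseteq> R" "Y \<inter> S = {}" "Y \<inter> UU a h = {}" "card Y = card (UU a h)"
        and UR: "UU a h \<subseteq> R" using I(10) a by meson
      show ?thesis
      proof (cases "UU a (h @ [N]) = UU a h")
        case True
        have "Y \<inter> (S - {x}) = {}" using Y(3) by blast
        then show ?thesis unfolding True using Y UR by (intro conjI exI[of _ Y]) simp_all
      next
        case False
        then obtain r where r: "r \<in> N" "r \<notin> UU a h" "UU a (h @ [N]) = insert r (UU a h)"
          using UU_change by blast
        have "usage h r = V" using r(1) by (simp add: N_def grp_def)
        then have aV: "a \<notin> V" using r(2) a by (auto simp: usage_def)
        have xU: "x \<notin> UU a (h @ [N])" using xp aV a by (auto simp: usage_def)
        have rS: "r \<in> S" using r(1) NS by blast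
        have finU: "finite (UU a h)" by (simp add: UU_def usedP_finite)
        have "x \<notin> Y" using Y(3) xS by blast
        then have "card (insert x Y) = card (UU a (h @ [N]))"
          using Y(1,5) r(2,3) finU by simp
        moreover have "insert x Y \<inter> UU a (h @ [N]) = {}"
          using Y(3,4) rS xU r(3) by auto
        moreover have "insert x Y \<inter> (S - {x}) = {}" using Y(3) by auto
        moreover have "insert x Y \<subseteq> R" using Y(2) xS I(2) by blast
        moreover have "UU a (h @ [N]) \<subseteq> R" unfolding r(3) using UR rS I(2) by blast
        ultimately show ?thesis using Y(1) by (intro conjI exI[of _ "insert x Y"]) simp_all
      qed
    qed
    show ?thesis unfolding adv inv_def prod.case
      apply (intro conjI c1 c2 c3 c4 c5 c6 c7 c8 c9)
      apply (intro allI impI)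
      apply (rule c10, assumption)
      done
  next
    case False
    have adv: "adv (Suc i) = (h @ [{}], S, X)" using False st by simp
    have cs: "card S \<le> k * 2 ^ k" using stuck_bound[OF finS False] .
    have nth: "j < length h \<Longrightarrow> (h @ [{}]) ! j = h ! j" for j by (simp add: nth_append)
    have c4: "X \<subseteq> {(j, r). j < length (h @ [{}]) \<and> r \<in> (h @ [{}]) ! j}"
      using I(4) nth by auto
    have c3: "\<forall>M\<in>set (h @ [{}]). M \<subseteq> R" using I(3) by simp
    have c9: "card S \<le> max (card R - Suc i) (k * 2 ^ k)" using cs by simp
    have c1: "length (h @ [{}]) = Suc i" using I(1) by simp
    show ?thesis unfolding adv inv_def prod.case UU_empty
      apply (intro conjI c1 c3 c4 c9 I(2) I(5) I(6) I(7) I(8))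
      using I(10) by blast
  qed
qed

end



lemma ratio_bound:
  fixes As :: "nat \<Rightarrow> online_alg" and k n :: nat
  assumes kn: "k * 2 ^ k < n"
  shows "ratio_n As k n \<le> ereal ((real n / 2) / (real n - real (k * 2 ^ k)))"
proof -
  define R where "R = {..<n}"
  have finR: "finite R" and cR: "card R = n" by (simp_all add: R_def)
  obtain h S X where st: "adv As R k n = (h, S, X)" by (metis prod_cases3)
  have C: "length h = n \<and> S \<subseteq> R \<and> (\<forall>N\<in>set h. N \<subseteq> R)
     \<and> X \<subseteq> {(j, r). j < length h \<and> r \<in> h ! j}
     \<and> (\<forall>(i, r)\<in>X. \<forall>(j, s)\<in>X. (i = j \<longleftrightarrow> r = s))
     \<and> snd ` X \<inter> S = {} \<and> finite X \<and> card X + card S = card R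
     \<and> card S \<le> max (card R - n) (k * 2 ^ k)
     \<and> (\<forall>a<k. UU As R a h \<subseteq> R \<and> (\<exists>Y. finite Y \<and> Y \<subseteq> R \<and> Y \<inter> S = {} \<and> Y \<inter> UU As R a h = {}
            \<and> card Y = card (UU As R a h)))"
    using inv_adv[OF finR, of As k n] unfolding st inv_def prod.case .
  note I = C[THEN conjunct1] C[THEN conjunct2, THEN conjunct1] C[THEN conjunct2, THEN conjunct2, THEN conjunct1] C[THEN conjunct2, THEN conjunct2, THEN conjunct2, THEN conjunct1] C[THEN conjunct2, THEN conjunct2, THEN conjunct2, THEN conjunct2, THEN conjunct1] C[THEN conjunct2, THEN conjunct2, THEN conjunct2, THEN conjunct2, THEN conjunct2, THEN conjunct1] C[THEN conjunct2, THEN conjunct2, THEN conjunct2, THEN conjunct2, THEN conjunct2, THEN conjunct2, THEN conjunct1] C[THEN conjunct2, THEN conjunct2, THEN conjunct2, THEN conjunct2, THEN conjunct2, THEN conjunct2, THEN conjunct2, THEN conjunct1] C[THEN conjunct2, THEN conjunct2, THEN conjunct2, THEN conjunct2, THEN conjunct2, THEN conjunct2, THEN conjunct2, THEN conjunct2, THEN conjunct1] C[THEN conjunct2, THEN conjunct2, THEN conjunct2, THEN conjunct2, THEN conjunct2, THEN conjunct2, THEN conjunct2, THEN conjunct2, THEN conjunct2]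
  have cS: "card S \<le> k * 2 ^ k" using I(9) cR by simp
  have cX: "card X \<ge> n - k * 2 ^ k" using I(8) cS cR by simp
  define T where "T = {(j, r). j < length h \<and> r \<in> h ! j}"
  have finT: "finite T"
  proof (rule finite_subset)
    show "T \<subseteq> {..<n} \<times> R" using I(1,3) by (auto simp: T_def)
    show "finite ({..<n} \<times> R)" using finR by simp
  qed
  have matX: "is_matching h X" unfolding is_matching_def using I(4,5) by blast
  have fincards: "finite {card M | M. is_matching h M}"
  proof (rule finite_subset)
    show "{card M | M. is_matching h M} \<subseteq> {..card T}"
      using finT by (auto simp: is_matching_def T_def intro!: card_mono)
  qed simp
  have opt: "opt_value h \<ge> card X"
    unfolding opt_value_def using matX by (intro Max_ge[OF fincards]) blast
  have optpos: "real (opt_value h) \<ge> real n - real (k * 2 ^ k)" using opt cX kn by linarith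
  have inst: "(R, h) \<in> instances n"
    unfolding instances_def using finR I(1,3) opt cX kn by auto
  have algb: "2 * alg_value (As a) R h \<le> n" if a: "a < k" for a
  proof -
    obtain Y where Y: "finite Y" "Y \<subseteq> R" "Y \<inter> UU As R a h = {}" "card Y = card (UU As R a h)"
      and UR: "UU As R a h \<subseteq> R" using I(10) a by meson
    have finU: "finite (UU As R a h)" by (simp add: UU_def usedP_finite)
    have "card (UU As R a h \<union> Y) = card (UU As R a h) + card Y"
      using Y finU by (simp add: card_Un_disjoint Int_commute)
    moreover have "card (UU As R a h \<union> Y) \<le> card R" using Y UR finR by (intro card_mono) auto
    moreover have "alg_value (As a) R h = card (UU As R a h)" by (simp add: alg_value_eq UU_def)
    ultimately show ?thesis using Y(4) cR by simp
  qed
  define A where "A = {alg_value (As i) R h | i. i < k}"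
  have finA: "finite A" unfolding A_def by simp
  have mvb: "2 * max_of_value As k R h \<le> n"
  proof -
    have "Max (insert 0 A) \<in> insert 0 A" using finA by (intro Max_in) auto
    then show ?thesis unfolding max_of_value_def A_def[symmetric] using algb by (auto simp: A_def)
  qed
  have "ratio_n As k n \<le> ereal (real (max_of_value As k (fst (R, h)) (snd (R, h))) / real (opt_value (snd (R, h))))"
    unfolding ratio_n_def by (rule INF_lower[OF inst])
  also have "\<dots> \<le> ereal ((real n / 2) / (real n - real (k * 2 ^ k)))"
  proof -
    have "real (max_of_value As k R h) \<le> real n / 2" using mvb by linarith
    moreover have "real n - real (k * 2 ^ k) > 0" using kn by linarith
    ultimately have "real (max_of_value As k R h) / real (opt_value h) \<le> (real n / 2) / (real n - real (k * 2 ^ k))"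
      using optpos by (intro frac_le) auto
    then show ?thesis by simp
  qed
  finally show ?thesis .
qed




lemma ev_lnln: "eventually (\<lambda>n. 4 \<le> ln (ln (real n))) sequentially"
proof -
  have "filterlim (\<lambda>n. ln (ln (real n))) at_top sequentially" by real_asymp
  then show ?thesis by (simp add: filterlim_at_top)
qed

lemma kbound:
  assumes ll: "4 \<le> ln (ln (real n))"
  shows "real (nat \<lfloor>t_fun n\<rfloor> * 2 ^ nat \<lfloor>t_fun n\<rfloor>) \<le> sqrt (real n)"
proof -
  define L where "L = ln (real n)"
  define K where "K = nat \<lfloor>t_fun n\<rfloor>"
  have lL: "4 \<le> ln L" using ll by (simp add: L_def)
  have Lpos: "L > 0"
  proof (rule ccontr)
    assume "\<not> L > 0"
    moreover have "L \<ge> 0" unfolding L_def by (cases "n = 0") auto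
    ultimately have "L = 0" by simp
    then have "ln L = 0" by simp
    then show False using lL by simp
  qed
  have npos: "real n > 0" using Lpos unfolding L_def by (cases "n = 0") auto
  have lnLpos: "ln L > 0" using lL by simp
  have tnn: "t_fun n \<ge> 0" unfolding t_fun_def L_def[symmetric] using Lpos lnLpos by simp
  have Kt: "real K \<le> t_fun n" unfolding K_def using tnn by linarith
  have "K * 2 ^ K \<le> 2 ^ K * 2 ^ K" using less_exp[of K] by simp
  also have "\<dots> = 4 ^ K" by (simp add: power_mult_distrib[symmetric])
  finally have k4: "real (K * 2 ^ K) \<le> 4 ^ K" by (metis of_nat_le_iff of_nat_numeral of_nat_power)
  have e4: "(4::real) ^ K = exp (real K * ln 4)" by (simp add: exp_of_nat_mult)
  have ln4: "ln (4::real) < 2"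
  proof -
    have "ln (4::real) = 2 * ln 2" using ln_realpow[of 2 2] by simp
    then show ?thesis using ln_2_less_1 by simp
  qed
  have ln4pos: "ln (4::real) > 0" by simp
  have "real K * ln 4 \<le> t_fun n * ln 4" using Kt ln4pos by (simp add: mult_right_mono)
  also have "\<dots> = L * ln 4 / ln L" unfolding t_fun_def L_def by simp
  also have "\<dots> \<le> L / 2"
  proof -
    have "ln 4 * 2 \<le> ln L" using lL ln4 by linarith
    then have "L * (ln 4 * 2) \<le> L * ln L" using Lpos by (intro mult_left_mono) auto
    then have "L * ln 4 * 2 \<le> L * ln L" by (simp add: mult.assoc)
    then show ?thesis using lnLpos by (simp add: divide_simps)
  qed
  finally have "exp (real K * ln 4) \<le> exp (L / 2)" by simp
  also have "exp (L / 2) = sqrt (real n)"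
    using npos by (simp add: L_def powr_half_sqrt[symmetric] powr_def)
  finally show ?thesis using k4 e4 unfolding K_def by linarith
qed

theorem corollary1:
  fixes A :: "nat \<Rightarrow> nat \<Rightarrow> online_alg"
  shows "liminf (\<lambda>n. ratio_n (A n) (nat \<lfloor>t_fun n\<rfloor>) n) \<le> ereal (1/2)"
proof -
  define g where "g n = real n / (2 * (real n - sqrt (real n)))" for n :: nat
  have lim: "g \<longlonglongrightarrow> 1/2" unfolding g_def by real_asymp
  have ev: "eventually (\<lambda>n. ratio_n (A n) (nat \<lfloor>t_fun n\<rfloor>) n \<le> ereal (g n)) sequentially"
    using ev_lnln eventually_ge_at_top[of 4]
  proof eventually_elim
    case (elim n)
    define k where "k = nat \<lfloor>t_fun n\<rfloor>"
    have kb: "real (k * 2 ^ k) \<le> sqrt (real n)" using kbound[OF elim(1)] by (simp add: k_def)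
    have n4: "real n \<ge> 4" using elim(2) by simp
    have sq: "sqrt (real n) < real n"
    proof -
      have "1 < sqrt (real n)" using n4 by simp
      then have "sqrt (real n) * 1 < sqrt (real n) * sqrt (real n)"
        by (intro mult_strict_left_mono) auto
      moreover have "sqrt (real n) * sqrt (real n) = real n" by simp
      ultimately show ?thesis by linarith
    qed
    have kn: "k * 2 ^ k < n" using kb sq by linarith
    have "ratio_n (A n) k n \<le> ereal ((real n / 2) / (real n - real (k * 2 ^ k)))"
      by (rule ratio_bound[OF kn])
    also have "(real n / 2) / (real n - real (k * 2 ^ k)) \<le> (real n / 2) / (real n - sqrt (real n))"
      using kb sq n4 by (intro divide_left_mono) auto
    also have "(real n / 2) / (real n - sqrt (real n)) = g n" by (simp add: g_def)
    finally show ?case by (simp add: k_def)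
  qed
  have "liminf (\<lambda>n. ratio_n (A n) (nat \<lfloor>t_fun n\<rfloor>) n) \<le> liminf (\<lambda>n. ereal (g n))"
    by (rule Liminf_mono[OF ev])
  also have "liminf (\<lambda>n. ereal (g n)) = ereal (1/2)"
    by (rule lim_imp_Liminf) (use lim in \<open>simp_all add: lim_ereal\<close>)
  finally show ?thesis .
qed


end
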